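(* Under the assumptions on $\Psi$ stated in the context, let $T\in(0,\infty]$, let $g^{in}\in L^1_{-2\beta,1}(0,\infty)$ be non-negative, let $g$ be a weak solution on $[0,T)$, and let $t\in(0,T)$. Then (i) $\lim_{q\to\infty}\int_0^t\int_0^q\int_q^\infty\zeta\Psi(\zeta,\eta)g(\zeta,s)g(\eta,s)d\eta d\zeta ds=0$, and (ii) $\lim_{q\to\infty}q\int_0^t\int_q^\infty\int_q^\infty\Psi(\zeta,\eta)g(\zeta,s)g(\eta,s)d\eta d\zeta ds=0$.
   Context: $\Psi:(0,\infty)^2\to[0,\infty)$ is measurable and symmetric and there are $\beta>0$, $k>0$ with $\Psi(\zeta,\eta)\le k(\zeta\eta)^{-\beta}$ on $(0,1)^2$, $\Psi(\zeta,\eta)\le k\eta\zeta^{-\beta}$ on $(0,1)\times(1,\infty)$, and $\Psi(\zeta,\eta)\le k(\zeta+\eta)$ on $(1,\infty)^2$. $L^1_{-2\beta,1}(0,\infty):=L^1((0,\infty);(\zeta^{-2\beta}+\zeta)d\zeta)$. A weak solution on $[0,T)$ is a non-negative $g\in\mathcal{C}([0,T);L^1(0,\infty))\cap L^\infty(0,T;L^1_{-2\beta,1}(0,\infty))$ such that for every $t\in(0,T)$ and $\omega\in L^\infty(0,\infty)$, $\int_0^\infty[g(\zeta,t)-g^{in}(\zeta)]\omega(\zeta)d\zeta=\frac12\int_0^t\int_0^\infty\int_0^\infty[\omega(\zeta+\eta)-\omega(\zeta)-\omega(\eta)]\Psi(\zeta,\eta)g(\zeta,s)g(\eta,s)d\eta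 d\zeta ds$. *)

theory Defs
  imports "HOL-Analysis.Analysis"
begin

definition kernel_hyp :: "(real \<Rightarrow> real \<Rightarrow> real) \<Rightarrow> real \<Rightarrow> real \<Rightarrow> bool" where
  "kernel_hyp \<Psi> \<beta> k \<longleftrightarrow>
     0 < \<beta> \<and> 0 < k \<and>
     (\<lambda>p. indicator ({0<..} \<times> {0<..}) p * \<Psi> (fst p) (snd p)) \<in> borel_measurable borel \<and>
     (\<forall>\<zeta>>0. \<forall>\<eta>>0. 0 \<le> \<Psi> \<zeta> \<eta> \<and> \<Psi> \<zeta> \<eta> = \<Psi> \<eta> \<zeta>) \<and>
     (\<forall>\<zeta>\<in>{0<..<1}. \<forall>\<eta>\<in>{0<..<1}. \<Psi> \<zeta> \<eta> \<le> k * (\<zeta> * \<eta>) powr (-\<beta>)) \<and>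
     (\<forall>\<zeta>\<in>{0<..<1}. \<forall>\<eta>\<in>{1<..}. \<Psi> \<zeta> \<eta> \<le> k * \<eta> * \<zeta> powr (-\<beta>)) \<and>
     (\<forall>\<zeta>\<in>{1<..}. \<forall>\<eta>\<in>{1<..}. \<Psi> \<zeta> \<eta> \<le> k * (\<zeta> + \<eta>))"

definition wgt :: "real \<Rightarrow> real \<Rightarrow> real" where
  "wgt \<beta> \<zeta> = \<zeta> powr (-2 * \<beta>) + \<zeta>"

definition init_hyp :: "real \<Rightarrow> (real \<Rightarrow> real) \<Rightarrow> bool" where
  "init_hyp \<beta> gin \<longleftrightarrow>
     gin \<in> borel_measurable borel \<and>
     (\<forall>\<zeta>>0. 0 \<le> gin \<zeta>) \<and>
     set_integrable lborel {0<..} (\<lambda>\<zeta>. wgt \<beta> \<zeta> * gin \<zeta>)"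

definition tint :: "ereal \<Rightarrow> real set" where
  "tint T = {s. 0 \<le> s \<and> ereal s < T}"

definition weak_solution ::
  "(real \<Rightarrow> real \<Rightarrow> real) \<Rightarrow> real \<Rightarrow> ereal \<Rightarrow> (real \<Rightarrow> real) \<Rightarrow> (real \<Rightarrow> real \<Rightarrow> real) \<Rightarrow> bool" where
  "weak_solution \<Psi> \<beta> T gin g \<longleftrightarrow>
     \<comment> \<open>joint (Borel) measurability on (0,inf) x [0,T) and non-negativity\<close>
     (\<lambda>p. indicator ({0<..} \<times> tint T) p * g (fst p) (snd p)) \<in> borel_measurable borel \<and>
     (\<forall>s\<in>tint T. \<forall>\<zeta>>0. 0 \<le> g \<zeta> s) \<and>
     \<comment> \<open>g in C([0,T); L^1(0,inf))\<close>
     (\<forall>s\<in>tint T. set_integrable lborel {0<..} (\<lambda>\<zeta>. g \<zeta> s)) \<and>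
     (\<forall>t0\<in>tint T. ((\<lambda>s. LINT \<zeta>:{0<..}|lborel. \<bar>g \<zeta> s - g \<zeta> t0\<bar>) \<longlongrightarrow> 0)
                      (at t0 within tint T)) \<and>
     \<comment> \<open>g in L^inf(0,T; L^1_{-2beta,1}(0,inf))\<close>
     (\<exists>M. \<forall>s\<in>tint T. set_integrable lborel {0<..} (\<lambda>\<zeta>. wgt \<beta> \<zeta> * g \<zeta> s) \<and>
                       (LINT \<zeta>:{0<..}|lborel. wgt \<beta> \<zeta> * g \<zeta> s) \<le> M) \<and>
     \<comment> \<open>weak formulation, for all t in (0,T) and all bounded measurable test functions\<close>
     (\<forall>t\<in>tint T. t > 0 \<longrightarrow> (\<forall>\<omega>::real\<Rightarrow>real. \<omega> \<in> borel_measurable borel \<longrightarrow>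
        (\<exists>B. \<forall>x>0. \<bar>\<omega> x\<bar> \<le> B) \<longrightarrow>
        (LINT \<zeta>:{0<..}|lborel. (g \<zeta> t - gin \<zeta>) * \<omega> \<zeta>) =
        1/2 * (LINT s:{0..t}|lborel. LINT \<zeta>:{0<..}|lborel. LINT \<eta>:{0<..}|lborel.
                 (\<omega> (\<zeta> + \<eta>) - \<omega> \<zeta> - \<omega> \<eta>) * \<Psi> \<zeta> \<eta> * g \<zeta> s * g \<eta> s)))"

end

theory Submission
  imports Defs
begin

lemma meas_tail:
  fixes G :: "real \<Rightarrow> real \<Rightarrow> real"
  assumes Gm: "(\<lambda>p. G (fst p) (snd p)) \<in> borel_measurable borel"
  shows "(\<lambda>s. \<integral>\<^sup>+\<eta>. ennreal (\<eta> * G \<eta> s) * indicator {q<..} \<eta> \<partial>lborel) \<in> borel_measurable lborel"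
proof -
  have "(\<lambda>p. G (snd p) (fst p)) \<in> borel_measurable borel"
  proof -
    have c: "(\<lambda>p::real\<times>real. (snd p, fst p)) \<in> borel_measurable borel"
      by (intro borel_measurable_continuous_onI continuous_intros)
    show ?thesis using measurable_compose[OF c Gm] by simp
  qed
  then have "(\<lambda>p::real\<times>real. ennreal (snd p * G (snd p) (fst p)) * indicator {q<..} (snd p)) \<in> borel_measurable borel"
  proof -
    assume a: "(\<lambda>p. G (snd p) (fst p)) \<in> borel_measurable borel"
    have sn: "(\<lambda>p::real\<times>real. snd p) \<in> borel_measurable borel"
      by (intro borel_measurable_continuous_onI continuous_intros)
    have i: "(\<lambda>p::real\<times>real. indicator {q<..} (snd p) :: ennreal) \<in> borel_measurable borel"
      using measurable_compose[OF sn borel_measurable_indicator[of "{q<..}" borel]] by simp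
    have "(\<lambda>p::real\<times>real. snd p * G (snd p) (fst p)) \<in> borel_measurable borel"
      using sn a by (rule borel_measurable_times)
    then have "(\<lambda>p::real\<times>real. ennreal (snd p * G (snd p) (fst p))) \<in> borel_measurable borel"
      by measurable
    thus ?thesis using i by (rule borel_measurable_times_ennreal)
  qed
  hence "(\<lambda>(s,\<eta>). ennreal (\<eta> * G \<eta> s) * indicator {q<..} \<eta>) \<in> borel_measurable (lborel \<Otimes>\<^sub>M lborel)"
    by (simp add: lborel_prod case_prod_beta')
  thus ?thesis by (rule lborel.borel_measurable_nn_integral)
qed

lemma meas_sec:
  fixes G :: "real \<Rightarrow> real \<Rightarrow> real"
  assumes Gm: "(\<lambda>p. G (fst p) (snd p)) \<in> borel_measurable borel"
  shows "(\<lambda>\<eta>. G \<eta> s) \<in> borel_measurable borel"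
proof -
  have c: "(\<lambda>x::real. (x, s)) \<in> borel_measurable borel"
    by (intro borel_measurable_continuous_onI continuous_intros)
  show ?thesis using measurable_compose[OF c Gm] by simp
qed

lemma decr_lim:
  fixes f :: "nat \<Rightarrow> real \<Rightarrow> ennreal"
  assumes dec: "\<And>i x. f (Suc i) x \<le> f i x"
    and m: "\<And>i. f i \<in> borel_measurable lborel"
    and fin: "(\<integral>\<^sup>+ x. f 0 x \<partial>lborel) < \<infinity>"
    and z: "\<And>x. (INF i. f i x) = 0"
  shows "(\<lambda>i. \<integral>\<^sup>+ x. f i x \<partial>lborel) \<longlonglongrightarrow> 0"
proof -
  have "(\<integral>\<^sup>+ x. (INF i. f i x) \<partial>lborel) = (INF i. integral\<^sup>N lborel (f i))"
    by (rule nn_integral_monotone_convergence_INF_AE') (use dec m fin in auto)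
  hence e: "(INF i. integral\<^sup>N lborel (f i)) = 0" using z by simp
  have "decseq (\<lambda>i. integral\<^sup>N lborel (f i))"
    by (intro decseq_SucI nn_integral_mono dec)
  from LIMSEQ_INF[OF this] show ?thesis using e by simp
qed

lemma INF_zero_of_lim:
  fixes X :: "nat \<Rightarrow> ennreal"
  assumes "decseq X" "X \<longlonglongrightarrow> 0"
  shows "(INF i. X i) = 0"
  using LIMSEQ_INF[OF assms(1)] assms(2) LIMSEQ_unique by blast

lemma tail_lim:
  fixes G :: "real \<Rightarrow> real \<Rightarrow> real" and M t :: real
  assumes Gm: "(\<lambda>p. G (fst p) (snd p)) \<in> borel_measurable borel"
    and Gnn: "\<And>z s. 0 \<le> G z s"
    and Nb: "\<And>s. s \<in> {0..t} \<Longrightarrow> (\<integral>\<^sup>+ z. ennreal (z * G z s) * indicator {0<..} z \<partial>lborel) \<le> ennreal M"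
  shows "((\<lambda>q. \<integral>\<^sup>+ s. (\<integral>\<^sup>+ \<eta>. ennreal (\<eta> * G \<eta> s) * indicator {q<..} \<eta> \<partial>lborel) * indicator {0..t} s \<partial>lborel) \<longlongrightarrow> 0) at_top"
proof -
  define Tl where "Tl q s = (\<integral>\<^sup>+ \<eta>. ennreal (\<eta> * G \<eta> s) * indicator {q<..} \<eta> \<partial>lborel)" for q s
  have Tmono: "Tl q' s \<le> Tl q s" if "q \<le> q'" for q q' s
    unfolding Tl_def using that by (intro nn_integral_mono) (auto simp: indicator_def)
  have T0: "Tl q s \<le> ennreal M" if "s \<in> {0..t}" "0 \<le> q" for q s
  proof -
    have "Tl q s \<le> (\<integral>\<^sup>+ z. ennreal (z * G z s) * indicator {0<..} z \<partial>lborel)"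
      unfolding Tl_def using that by (intro nn_integral_mono) (auto simp: indicator_def)
    also have "\<dots> \<le> ennreal M" using Nb that by blast
    finally show ?thesis .
  qed
  have lim1: "(\<lambda>i. Tl (real i) s) \<longlonglongrightarrow> 0" if s: "s \<in> {0..t}" for s
    unfolding Tl_def
  proof (rule decr_lim)
    show "ennreal (x * G x s) * indicator {real (Suc i)<..} x \<le> ennreal (x * G x s) * indicator {real i<..} x" for i x
      by (auto simp: indicator_def)
    show "(\<lambda>x. ennreal (x * G x s) * indicator {real i<..} x) \<in> borel_measurable lborel" for i
      using meas_sec[OF Gm, of s] by measurable
    show "(\<integral>\<^sup>+ x. ennreal (x * G x s) * indicator {real 0<..} x \<partial>lborel) < \<infinity>"
      using T0[OF s, of 0] unfolding Tl_def by (simp add: le_less_trans)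
    show "(INF i. ennreal (x * G x s) * indicator {real i<..} x) = 0" for x
    proof -
      obtain n where "x < real n" using reals_Archimedean2 by blast
      hence "(INF i. ennreal (x * G x s) * indicator {real i<..} x) \<le> ennreal (x * G x s) * indicator {real n<..} x"
        by (rule_tac INF_lower) auto
      also have "\<dots> = 0" using \<open>x < real n\<close> by (simp add: indicator_def)
      finally show ?thesis by simp
    qed
  qed
  define F where "F q = (\<integral>\<^sup>+ s. Tl q s * indicator {0..t} s \<partial>lborel)" for q
  have Fmono: "F q' \<le> F q" if "q \<le> q'" for q q'
    unfolding F_def using Tmono[OF that] by (intro nn_integral_mono) (auto intro: mult_right_mono)
  have Fseq: "(\<lambda>i. F (real i)) \<longlonglongrightarrow> 0"
    unfolding F_def
  proof (rule decr_lim)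
    show "Tl (real (Suc i)) x * indicator {0..t} x \<le> Tl (real i) x * indicator {0..t} x" for i x
      using Tmono[of "real i" "real (Suc i)" x] by (auto intro: mult_right_mono)
    show "(\<lambda>x. Tl (real i) x * indicator {0..t} x) \<in> borel_measurable lborel" for i
      using meas_tail[OF Gm, of "real i"] unfolding Tl_def by measurable
    have "(\<integral>\<^sup>+ x. Tl (real 0) x * indicator {0..t} x \<partial>lborel) \<le> (\<integral>\<^sup>+ x. ennreal M * indicator {0..t} x \<partial>lborel)"
      using T0 by (intro nn_integral_mono) (auto simp: indicator_def)
    also have "\<dots> = ennreal M * emeasure lborel {0..t}"
      by (rule nn_integral_cmult_indicator) auto
    also have "\<dots> < \<infinity>"
      by (cases "0 \<le> t") (auto simp: ennreal_mult_less_top)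
    finally show "(\<integral>\<^sup>+ x. Tl (real 0) x * indicator {0..t} x \<partial>lborel) < \<infinity>" .
    show "(INF i. Tl (real i) x * indicator {0..t} x) = 0" for x
    proof (cases "x \<in> {0..t}")
      case True
      have "decseq (\<lambda>i. Tl (real i) x)" by (intro decseq_SucI Tmono) auto
      from INF_zero_of_lim[OF this lim1[OF True]] True show ?thesis by simp
    next
      case False thus ?thesis by simp
    qed
  qed
  have "(F \<longlongrightarrow> 0) at_top"
  proof (rule order_tendstoI)
    fix a :: ennreal assume "a < 0" thus "\<forall>\<^sub>F x in at_top. a < F x" by simp
  next
    fix a :: ennreal assume "0 < a"
    then obtain n where n: "F (real n) < a"
      using order_tendstoD(2)[OF Fseq \<open>0 < a\<close>] by (auto simp: eventually_sequentially)
    show "\<forall>\<^sub>F x in at_top. F x < a"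
      using eventually_ge_at_top[of "real n"] by eventually_elim (use Fmono n in \<open>blast intro: le_less_trans\<close>)
  qed
  thus ?thesis unfolding F_def Tl_def .
qed

lemma kern_i:
  assumes K: "kernel_hyp \<Psi> \<beta> k" and z: "0 < z" "z \<le> q" "z \<noteq> 1" and e: "q < e" "1 < q"
  shows "z * \<Psi> z e \<le> 2 * k * wgt \<beta> z * e"
proof (cases "z < 1")
  case True
  from K have b: "0 < \<beta>" "0 < k" unfolding kernel_hyp_def by auto
  from K have "\<forall>\<zeta>\<in>{0<..<1}. \<forall>\<eta>\<in>{1<..}. \<Psi> \<zeta> \<eta> \<le> k * \<eta> * \<zeta> powr (-\<beta>)"
    unfolding kernel_hyp_def by blast
  hence h: "\<Psi> z e \<le> k * e * z powr (-\<beta>)" using True z e by auto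
  have "z * \<Psi> z e \<le> z * (k * e * z powr (-\<beta>))"
    using h z by (intro mult_left_mono) auto
  also have "\<dots> = k * e * z powr (1 - \<beta>)"
    using z by (simp add: powr_diff powr_minus divide_simps)
  also have "\<dots> \<le> k * e * z powr (-2 * \<beta>)"
    using b z e True by (intro mult_left_mono powr_mono') auto
  also have "\<dots> \<le> 2 * k * wgt \<beta> z * e"
    using b z e unfolding wgt_def by (simp add: algebra_simps)
  finally show ?thesis .
next
  case False
  hence z1: "1 < z" using z by auto
  from K have b: "0 < \<beta>" "0 < k" unfolding kernel_hyp_def by auto
  from K have "\<forall>\<zeta>\<in>{1<..}. \<forall>\<eta>\<in>{1<..}. \<Psi> \<zeta> \<eta> \<le> k * (\<zeta> + \<eta>)"
    unfolding kernel_hyp_def by blast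
  hence h: "\<Psi> z e \<le> k * (z + e)" using z1 z e by auto
  have "z * \<Psi> z e \<le> z * (k * (z + e))"
    using h z by (intro mult_left_mono) auto
  also have "\<dots> \<le> z * (2 * k * e)"
    using z e b by (intro mult_left_mono) auto
  also have "\<dots> \<le> wgt \<beta> z * (2 * k * e)"
    using z e b unfolding wgt_def by (intro mult_right_mono) auto
  finally show ?thesis by (simp add: algebra_simps)
qed

lemma kern_ii:
  assumes K: "kernel_hyp \<Psi> \<beta> k" and z: "q < z" "q < e" "1 < q"
  shows "\<Psi> z e \<le> 2 * k / q * z * e"
proof -
  from K have b: "0 < k" unfolding kernel_hyp_def by auto
  from K have "\<forall>\<zeta>\<in>{1<..}. \<forall>\<eta>\<in>{1<..}. \<Psi> \<zeta> \<eta> \<le> k * (\<zeta> + \<eta>)"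
    unfolding kernel_hyp_def by blast
  hence h: "\<Psi> z e \<le> k * (z + e)" using z by auto
  have "q * (z + e) \<le> 2 * z * e"
  proof -
    have "q * z \<le> e * z" "q * e \<le> z * e" using z by (auto intro: mult_right_mono)
    thus ?thesis by (simp add: algebra_simps)
  qed
  hence "k * (q * (z + e)) \<le> k * (2 * z * e)"
    using b by (intro mult_left_mono) auto
  hence "k * (z + e) \<le> 2 * k * z * e / q"
    using z by (simp add: pos_le_divide_eq algebra_simps)
  hence "k * (z + e) \<le> 2 * k / q * z * e" by simp
  with h show ?thesis by linarith
qed

lemma bound_i:
  fixes G g :: "real \<Rightarrow> real \<Rightarrow> real" and M t q :: real
  assumes K: "kernel_hyp \<Psi> \<beta> k"
    and Gm: "(\<lambda>p. G (fst p) (snd p)) \<in> borel_measurable borel"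
    and Gnn: "\<And>z s. 0 \<le> G z s"
    and gG: "\<And>z s. 0 < z \<Longrightarrow> s \<in> {0..t} \<Longrightarrow> g z s = G z s"
    and Nw: "\<And>s. s \<in> {0..t} \<Longrightarrow> (\<integral>\<^sup>+ z. ennreal (wgt \<beta> z * G z s) * indicator {0<..} z \<partial>lborel) \<le> ennreal M"
    and M0: "0 \<le> M" and q: "1 < q"
  shows "(\<integral>\<^sup>+ s\<in>{0..t}. \<integral>\<^sup>+ \<zeta>\<in>{0<..q}. \<integral>\<^sup>+ \<eta>\<in>{q<..}.
              ennreal (\<zeta> * \<Psi> \<zeta> \<eta> * g \<zeta> s * g \<eta> s) \<partial>lborel \<partial>lborel \<partial>lborel)
     \<le> ennreal (2 * k * M) * (\<integral>\<^sup>+ s. (\<integral>\<^sup>+ \<eta>. ennreal (\<eta> * G \<eta> s) * indicator {q<..} \<eta> \<partial>lborel) * indicator {0..t} s \<partial>lborel)"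
proof -
  define Tl where "Tl s = (\<integral>\<^sup>+ \<eta>. ennreal (\<eta> * G \<eta> s) * indicator {q<..} \<eta> \<partial>lborel)" for s
  have k0: "0 < k" using K unfolding kernel_hyp_def by auto
  have wnn: "0 \<le> wgt \<beta> z" if "0 < z" for z using that unfolding wgt_def by auto
  have inner: "(\<integral>\<^sup>+ \<zeta>\<in>{0<..q}. \<integral>\<^sup>+ \<eta>\<in>{q<..}. ennreal (\<zeta> * \<Psi> \<zeta> \<eta> * g \<zeta> s * g \<eta> s) \<partial>lborel \<partial>lborel)
      \<le> ennreal (2 * k * M) * Tl s" if s: "s \<in> {0..t}" for s
  proof -
    have "(\<integral>\<^sup>+ \<zeta>\<in>{0<..q}. \<integral>\<^sup>+ \<eta>\<in>{q<..}. ennreal (\<zeta> * \<Psi> \<zeta> \<eta> * g \<zeta> s * g \<eta> s) \<partial>lborel \<partial>lborel)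
      \<le> (\<integral>\<^sup>+ \<zeta>. ennreal (2 * k) * Tl s * (ennreal (wgt \<beta> \<zeta> * G \<zeta> s) * indicator {0<..} \<zeta>) \<partial>lborel)"
    proof (rule nn_integral_mono_AE)
      show "AE \<zeta> in lborel. (\<integral>\<^sup>+ \<eta>\<in>{q<..}. ennreal (\<zeta> * \<Psi> \<zeta> \<eta> * g \<zeta> s * g \<eta> s) \<partial>lborel) * indicator {0<..q} \<zeta>
          \<le> ennreal (2 * k) * Tl s * (ennreal (wgt \<beta> \<zeta> * G \<zeta> s) * indicator {0<..} \<zeta>)"
        using AE_lborel_singleton[of 1]
      proof eventually_elim
        case (elim z)
        show ?case
        proof (cases "z \<in> {0<..q}")
          case False thus ?thesis by simp
        next
          case True
          have "(\<integral>\<^sup>+ \<eta>\<in>{q<..}. ennreal (z * \<Psi> z \<eta> * g z s * g \<eta> s) \<partial>lborel)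
             \<le> (\<integral>\<^sup>+ \<eta>. ennreal (2 * k * wgt \<beta> z * G z s) * (ennreal (\<eta> * G \<eta> s) * indicator {q<..} \<eta>) \<partial>lborel)"
          proof (intro nn_integral_mono)
            fix e
            show "ennreal (z * \<Psi> z e * g z s * g e s) * indicator {q<..} e
              \<le> ennreal (2 * k * wgt \<beta> z * G z s) * (ennreal (e * G e s) * indicator {q<..} e)"
            proof (cases "q < e")
              case False thus ?thesis by simp
            next
              case qe: True
              have ge: "g e s = G e s" "g z s = G z s" using gG s True qe q by auto
              have kk: "z * \<Psi> z e \<le> 2 * k * wgt \<beta> z * e"
                using kern_i[OF K, of z q e] True qe q elim by auto
              have "z * \<Psi> z e * g z s * g e s = (z * \<Psi> z e) * (G z s * G e s)" using ge by simp
              also have "\<dots> \<le> (2 * k * wgt \<beta> z * e) * (G z s * G e s)"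
                using kk Gnn by (intro mult_right_mono) auto
              also have "\<dots> = (2 * k * wgt \<beta> z * G z s) * (e * G e s)" by simp
              finally have "ennreal (z * \<Psi> z e * g z s * g e s) \<le> ennreal (2 * k * wgt \<beta> z * G z s) * ennreal (e * G e s)"
                using k0 wnn[of z] True qe q Gnn by (simp add: ennreal_mult[symmetric] ennreal_leI)
              thus ?thesis using qe by simp
            qed
          qed
          also have "\<dots> = ennreal (2 * k * wgt \<beta> z * G z s) * Tl s"
            unfolding Tl_def
            by (rule nn_integral_cmult) (use meas_sec[OF Gm, of s] in measurable)
          also have "\<dots> = ennreal (2 * k) * Tl s * (ennreal (wgt \<beta> z * G z s) * indicator {0<..} z)"
            using True k0 wnn[of z] Gnn by (simp add: ennreal_mult mult_ac)
          finally show ?thesis using True by simp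
        qed
      qed
    qed
    also have "\<dots> = ennreal (2 * k) * Tl s * (\<integral>\<^sup>+ \<zeta>. ennreal (wgt \<beta> \<zeta> * G \<zeta> s) * indicator {0<..} \<zeta> \<partial>lborel)"
      by (rule nn_integral_cmult) (use meas_sec[OF Gm, of s] in \<open>unfold wgt_def, measurable\<close>)
    also have "\<dots> \<le> ennreal (2 * k) * Tl s * ennreal M"
      using Nw[OF s] by (intro mult_left_mono) auto
    also have "\<dots> = ennreal (2 * k * M) * Tl s"
      using k0 M0 by (simp add: ennreal_mult mult_ac)
    finally show ?thesis .
  qed
  have "(\<integral>\<^sup>+ s\<in>{0..t}. \<integral>\<^sup>+ \<zeta>\<in>{0<..q}. \<integral>\<^sup>+ \<eta>\<in>{q<..}.
              ennreal (\<zeta> * \<Psi> \<zeta> \<eta> * g \<zeta> s * g \<eta> s) \<partial>lborel \<partial>lborel \<partial>lborel)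
     \<le> (\<integral>\<^sup>+ s. ennreal (2 * k * M) * (Tl s * indicator {0..t} s) \<partial>lborel)"
    using inner by (intro nn_integral_mono) (auto simp: indicator_def)
  also have "\<dots> = ennreal (2 * k * M) * (\<integral>\<^sup>+ s. Tl s * indicator {0..t} s \<partial>lborel)"
    by (rule nn_integral_cmult) (use meas_tail[OF Gm, of q] in \<open>unfold Tl_def, measurable\<close>)
  finally show ?thesis unfolding Tl_def .
qed

lemma bound_ii:
  fixes G g :: "real \<Rightarrow> real \<Rightarrow> real" and M t q :: real
  assumes K: "kernel_hyp \<Psi> \<beta> k"
    and Gm: "(\<lambda>p. G (fst p) (snd p)) \<in> borel_measurable borel"
    and Gnn: "\<And>z s. 0 \<le> G z s"
    and gG: "\<And>z s. 0 < z \<Longrightarrow> s \<in> {0..t} \<Longrightarrow> g z s = G z s"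
    and Nb: "\<And>s. s \<in> {0..t} \<Longrightarrow> (\<integral>\<^sup>+ z. ennreal (z * G z s) * indicator {0<..} z \<partial>lborel) \<le> ennreal M"
    and M0: "0 \<le> M" and q: "1 < q"
  shows "ennreal q * (\<integral>\<^sup>+ s\<in>{0..t}. \<integral>\<^sup>+ \<zeta>\<in>{q<..}. \<integral>\<^sup>+ \<eta>\<in>{q<..}.
              ennreal (\<Psi> \<zeta> \<eta> * g \<zeta> s * g \<eta> s) \<partial>lborel \<partial>lborel \<partial>lborel)
     \<le> ennreal (2 * k * M) * (\<integral>\<^sup>+ s. (\<integral>\<^sup>+ \<eta>. ennreal (\<eta> * G \<eta> s) * indicator {q<..} \<eta> \<partial>lborel) * indicator {0..t} s \<partial>lborel)"
proof -
  define Tl where "Tl s = (\<integral>\<^sup>+ \<eta>. ennreal (\<eta> * G \<eta> s) * indicator {q<..} \<eta> \<partial>lborel)" for s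
  have k0: "0 < k" using K unfolding kernel_hyp_def by auto
  have Tb: "Tl s \<le> ennreal M" if s: "s \<in> {0..t}" for s
  proof -
    have "Tl s \<le> (\<integral>\<^sup>+ z. ennreal (z * G z s) * indicator {0<..} z \<partial>lborel)"
      unfolding Tl_def using q by (intro nn_integral_mono) (auto simp: indicator_def)
    also have "\<dots> \<le> ennreal M" using Nb s by blast
    finally show ?thesis .
  qed
  define c where "c = 2 * k / q"
  have c0: "0 \<le> c" using k0 q unfolding c_def by auto
  have inner: "(\<integral>\<^sup>+ \<zeta>\<in>{q<..}. \<integral>\<^sup>+ \<eta>\<in>{q<..}. ennreal (\<Psi> \<zeta> \<eta> * g \<zeta> s * g \<eta> s) \<partial>lborel \<partial>lborel)
      \<le> ennreal (c * M) * Tl s" if s: "s \<in> {0..t}" for s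
  proof -
    have "(\<integral>\<^sup>+ \<zeta>\<in>{q<..}. \<integral>\<^sup>+ \<eta>\<in>{q<..}. ennreal (\<Psi> \<zeta> \<eta> * g \<zeta> s * g \<eta> s) \<partial>lborel \<partial>lborel)
      \<le> (\<integral>\<^sup>+ \<zeta>. ennreal c * Tl s * (ennreal (\<zeta> * G \<zeta> s) * indicator {q<..} \<zeta>) \<partial>lborel)"
    proof (rule nn_integral_mono)
      fix z
      show "(\<integral>\<^sup>+ \<eta>\<in>{q<..}. ennreal (\<Psi> z \<eta> * g z s * g \<eta> s) \<partial>lborel) * indicator {q<..} z
          \<le> ennreal c * Tl s * (ennreal (z * G z s) * indicator {q<..} z)"
      proof (cases "q < z")
        case False thus ?thesis by simp
      next
        case True
        have "(\<integral>\<^sup>+ \<eta>\<in>{q<..}. ennreal (\<Psi> z \<eta> * g z s * g \<eta> s) \<partial>lborel)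
           \<le> (\<integral>\<^sup>+ \<eta>. ennreal (c * z * G z s) * (ennreal (\<eta> * G \<eta> s) * indicator {q<..} \<eta>) \<partial>lborel)"
        proof (intro nn_integral_mono)
          fix e
          show "ennreal (\<Psi> z e * g z s * g e s) * indicator {q<..} e
            \<le> ennreal (c * z * G z s) * (ennreal (e * G e s) * indicator {q<..} e)"
          proof (cases "q < e")
            case False thus ?thesis by simp
          next
            case qe: True
            have ge: "g e s = G e s" "g z s = G z s" using gG s True qe q by auto
            have kk: "\<Psi> z e \<le> c * z * e"
              using kern_ii[OF K, of q z e] True qe q unfolding c_def by auto
            have "\<Psi> z e * g z s * g e s = \<Psi> z e * (G z s * G e s)" using ge by simp
            also have "\<dots> \<le> (c * z * e) * (G z s * G e s)"
              using kk Gnn by (intro mult_right_mono) auto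
            also have "\<dots> = (c * z * G z s) * (e * G e s)" by simp
            finally have "ennreal (\<Psi> z e * g z s * g e s) \<le> ennreal (c * z * G z s) * ennreal (e * G e s)"
              using c0 True qe q Gnn by (simp add: ennreal_mult[symmetric] ennreal_leI)
            thus ?thesis using qe by simp
          qed
        qed
        also have "\<dots> = ennreal (c * z * G z s) * Tl s"
          unfolding Tl_def
          by (rule nn_integral_cmult) (use meas_sec[OF Gm, of s] in measurable)
        also have "\<dots> = ennreal c * Tl s * (ennreal (z * G z s) * indicator {q<..} z)"
          using True c0 q Gnn by (simp add: ennreal_mult mult_ac)
        finally show ?thesis using True by simp
      qed
    qed
    also have "\<dots> = ennreal c * Tl s * Tl s"
      unfolding Tl_def
      by (rule nn_integral_cmult) (use meas_sec[OF Gm, of s] in measurable)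
    also have "\<dots> \<le> ennreal c * ennreal M * Tl s"
    proof -
      have "ennreal c * Tl s * Tl s \<le> ennreal c * Tl s * ennreal M" using Tb[OF s] by (rule mult_left_mono) simp
      thus ?thesis by (metis mult.assoc mult.commute)
    qed
    also have "\<dots> = ennreal (c * M) * Tl s"
      using c0 M0 by (simp add: ennreal_mult)
    finally show ?thesis .
  qed
  have "(\<integral>\<^sup>+ s\<in>{0..t}. \<integral>\<^sup>+ \<zeta>\<in>{q<..}. \<integral>\<^sup>+ \<eta>\<in>{q<..}.
              ennreal (\<Psi> \<zeta> \<eta> * g \<zeta> s * g \<eta> s) \<partial>lborel \<partial>lborel \<partial>lborel)
     \<le> (\<integral>\<^sup>+ s. ennreal (c * M) * (Tl s * indicator {0..t} s) \<partial>lborel)"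
    using inner by (intro nn_integral_mono) (auto simp: indicator_def)
  also have "\<dots> = ennreal (c * M) * (\<integral>\<^sup>+ s. Tl s * indicator {0..t} s \<partial>lborel)"
    by (rule nn_integral_cmult) (use meas_tail[OF Gm, of q] in \<open>unfold Tl_def, measurable\<close>)
  finally have "ennreal q * (\<integral>\<^sup>+ s\<in>{0..t}. \<integral>\<^sup>+ \<zeta>\<in>{q<..}. \<integral>\<^sup>+ \<eta>\<in>{q<..}.
              ennreal (\<Psi> \<zeta> \<eta> * g \<zeta> s * g \<eta> s) \<partial>lborel \<partial>lborel \<partial>lborel)
     \<le> ennreal q * (ennreal (c * M) * (\<integral>\<^sup>+ s. Tl s * indicator {0..t} s \<partial>lborel))"
    by (rule mult_left_mono) simp
  also have "\<dots> = ennreal (q * (c * M)) * (\<integral>\<^sup>+ s. Tl s * indicator {0..t} s \<partial>lborel)"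
    using q c0 M0 by (simp add: ennreal_mult mult.assoc)
  also have "q * (c * M) = 2 * k * M" using q unfolding c_def by simp
  finally show ?thesis unfolding Tl_def .
qed

theorem lemma3p3:
  fixes \<Psi> :: "real \<Rightarrow> real \<Rightarrow> real" and \<beta> k :: real and T :: ereal
    and gin :: "real \<Rightarrow> real" and g :: "real \<Rightarrow> real \<Rightarrow> real" and t :: real
  assumes "kernel_hyp \<Psi> \<beta> k"
    and "0 < T"
    and "init_hyp \<beta> gin"
    and "weak_solution \<Psi> \<beta> T gin g"
    and "0 < t" and "ereal t < T"
  shows "(((\<lambda>q. \<integral>\<^sup>+ s\<in>{0..t}. \<integral>\<^sup>+ \<zeta>\<in>{0<..q}. \<integral>\<^sup>+ \<eta>\<in>{q<..}.
              ennreal (\<zeta> * \<Psi> \<zeta> \<eta> * g \<zeta> s * g \<eta> s) \<partial>lborel \<partial>lborel \<partial>lborel)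
           \<longlongrightarrow> 0) at_top) \<and>
         (((\<lambda>q. ennreal q * (\<integral>\<^sup>+ s\<in>{0..t}. \<integral>\<^sup>+ \<zeta>\<in>{q<..}. \<integral>\<^sup>+ \<eta>\<in>{q<..}.
              ennreal (\<Psi> \<zeta> \<eta> * g \<zeta> s * g \<eta> s) \<partial>lborel \<partial>lborel \<partial>lborel))
           \<longlongrightarrow> 0) at_top)"
proof -
  note K = assms(1)
  from assms(4) have Gm0: "(\<lambda>p. indicator ({0<..} \<times> tint T) p * g (fst p) (snd p)) \<in> borel_measurable borel"
    and gnn: "\<forall>s\<in>tint T. \<forall>\<zeta>>0. 0 \<le> g \<zeta> s"
    and Mex: "\<exists>M. \<forall>s\<in>tint T. set_integrable lborel {0<..} (\<lambda>\<zeta>. wgt \<beta> \<zeta> * g \<zeta> s) \<and>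
                       (LINT \<zeta>:{0<..}|lborel. wgt \<beta> \<zeta> * g \<zeta> s) \<le> M"
    unfolding weak_solution_def by blast+
  from Mex obtain M where M: "\<And>s. s \<in> tint T \<Longrightarrow> set_integrable lborel {0<..} (\<lambda>\<zeta>. wgt \<beta> \<zeta> * g \<zeta> s)"
      "\<And>s. s \<in> tint T \<Longrightarrow> (LINT \<zeta>:{0<..}|lborel. wgt \<beta> \<zeta> * g \<zeta> s) \<le> M" by blast
  define M0 where "M0 = max M 0"
  have M00: "0 \<le> M0" unfolding M0_def by simp
  define G where "G z s = indicator ({0<..} \<times> tint T) (z, s) * g z s" for z s
  have Gm: "(\<lambda>p. G (fst p) (snd p)) \<in> borel_measurable borel"
    using Gm0 unfolding G_def by simp
  have st: "s \<in> tint T" if "s \<in> {0..t}" for s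
  proof -
    have "ereal s \<le> ereal t" using that by simp
    hence "ereal s < T" using assms(6) by (rule le_less_trans)
    thus ?thesis using that unfolding tint_def by auto
  qed
  have Gnn: "0 \<le> G z s" for z s
    using gnn unfolding G_def by (auto simp: indicator_def)
  have gG: "g z s = G z s" if "0 < z" "s \<in> {0..t}" for z s
    using st[OF that(2)] that unfolding G_def by (simp add: indicator_def)
  have wnn: "0 \<le> wgt \<beta> z" if "0 < z" for z using that unfolding wgt_def by auto
  have Nw: "(\<integral>\<^sup>+ z. ennreal (wgt \<beta> z * G z s) * indicator {0<..} z \<partial>lborel) \<le> ennreal M0"
    if s: "s \<in> {0..t}" for s
  proof -
    have "(\<integral>\<^sup>+ z. ennreal (wgt \<beta> z * G z s) * indicator {0<..} z \<partial>lborel)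
        = (\<integral>\<^sup>+ z. ennreal (indicator {0<..} z * (wgt \<beta> z * g z s)) \<partial>lborel)"
      by (intro nn_integral_cong) (auto simp: indicator_def gG[OF _ s])
    also have "\<dots> = ennreal (LINT \<zeta>:{0<..}|lborel. wgt \<beta> \<zeta> * g \<zeta> s)"
      unfolding set_lebesgue_integral_def real_scaleR_def
      using M(1)[OF st[OF s]] gnn st[OF s] wnn
      by (intro nn_integral_eq_integral)
         (auto simp: set_integrable_def indicator_def)
    also have "\<dots> \<le> ennreal M0"
      using M(2)[OF st[OF s]] unfolding M0_def by (intro ennreal_leI) auto
    finally show ?thesis .
  qed
  have Nb: "(\<integral>\<^sup>+ z. ennreal (z * G z s) * indicator {0<..} z \<partial>lborel) \<le> ennreal M0"
    if s: "s \<in> {0..t}" for s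
  proof -
    have "(\<integral>\<^sup>+ z. ennreal (z * G z s) * indicator {0<..} z \<partial>lborel)
       \<le> (\<integral>\<^sup>+ z. ennreal (wgt \<beta> z * G z s) * indicator {0<..} z \<partial>lborel)"
    proof (intro nn_integral_mono)
      fix z
      show "ennreal (z * G z s) * indicator {0<..} z \<le> ennreal (wgt \<beta> z * G z s) * indicator {0<..} z"
      proof (cases "0 < z")
        case True
        have "z \<le> wgt \<beta> z" unfolding wgt_def by simp
        hence "z * G z s \<le> wgt \<beta> z * G z s" using Gnn by (intro mult_right_mono) auto
        thus ?thesis by (auto intro: ennreal_leI simp: indicator_def)
      qed simp
    qed
    also have "\<dots> \<le> ennreal M0" using Nw[OF s] .
    finally show ?thesis .
  qed
  define F where "F q = (\<integral>\<^sup>+ s. (\<integral>\<^sup>+ \<eta>. ennreal (\<eta> * G \<eta> s) * indicator {q<..} \<eta> \<partial>lborel) * indicator {0..t} s \<partial>lborel)" for q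
  have F0: "(F \<longlongrightarrow> 0) at_top"
    unfolding F_def by (rule tail_lim[OF Gm Gnn Nb]) auto
  have CF: "((\<lambda>q. ennreal (2 * k * M0) * F q) \<longlongrightarrow> 0) at_top"
    using ennreal_tendsto_cmult[OF _ F0, of "ennreal (2 * k * M0)"] by simp
  show ?thesis
  proof
    show "((\<lambda>q. \<integral>\<^sup>+ s\<in>{0..t}. \<integral>\<^sup>+ \<zeta>\<in>{0<..q}. \<integral>\<^sup>+ \<eta>\<in>{q<..}.
              ennreal (\<zeta> * \<Psi> \<zeta> \<eta> * g \<zeta> s * g \<eta> s) \<partial>lborel \<partial>lborel \<partial>lborel) \<longlongrightarrow> 0) at_top"
    proof (rule tendsto_sandwich[OF _ _ tendsto_const CF])
      show "\<forall>\<^sub>F q in at_top. 0 \<le> (\<integral>\<^sup>+ s\<in>{0..t}. \<integral>\<^sup>+ \<zeta>\<in>{0<..q}. \<integral>\<^sup>+ \<eta>\<in>{q<..}.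
              ennreal (\<zeta> * \<Psi> \<zeta> \<eta> * g \<zeta> s * g \<eta> s) \<partial>lborel \<partial>lborel \<partial>lborel)" by simp
      show "\<forall>\<^sub>F q in at_top. (\<integral>\<^sup>+ s\<in>{0..t}. \<integral>\<^sup>+ \<zeta>\<in>{0<..q}. \<integral>\<^sup>+ \<eta>\<in>{q<..}.
              ennreal (\<zeta> * \<Psi> \<zeta> \<eta> * g \<zeta> s * g \<eta> s) \<partial>lborel \<partial>lborel \<partial>lborel) \<le> ennreal (2 * k * M0) * F q"
        using eventually_gt_at_top[of "1::real"]
        by eventually_elim (unfold F_def, rule bound_i[OF K Gm Gnn gG Nw M00], auto)
    qed
    show "((\<lambda>q. ennreal q * (\<integral>\<^sup>+ s\<in>{0..t}. \<integral>\<^sup>+ \<zeta>\<in>{q<..}. \<integral>\<^sup>+ \<eta>\<in>{q<..}.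
              ennreal (\<Psi> \<zeta> \<eta> * g \<zeta> s * g \<eta> s) \<partial>lborel \<partial>lborel \<partial>lborel)) \<longlongrightarrow> 0) at_top"
    proof (rule tendsto_sandwich[OF _ _ tendsto_const CF])
      show "\<forall>\<^sub>F q in at_top. 0 \<le> ennreal q * (\<integral>\<^sup>+ s\<in>{0..t}. \<integral>\<^sup>+ \<zeta>\<in>{q<..}. \<integral>\<^sup>+ \<eta>\<in>{q<..}.
              ennreal (\<Psi> \<zeta> \<eta> * g \<zeta> s * g \<eta> s) \<partial>lborel \<partial>lborel \<partial>lborel)" by simp
      show "\<forall>\<^sub>F q in at_top. ennreal q * (\<integral>\<^sup>+ s\<in>{0..t}. \<integral>\<^sup>+ \<zeta>\<in>{q<..}. \<integral>\<^sup>+ \<eta>\<in>{q<..}.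
              ennreal (\<Psi> \<zeta> \<eta> * g \<zeta> s * g \<eta> s) \<partial>lborel \<partial>lborel \<partial>lborel) \<le> ennreal (2 * k * M0) * F q"
        using eventually_gt_at_top[of "1::real"]
        by eventually_elim (unfold F_def, rule bound_ii[OF K Gm Gnn gG Nb M00], auto)
    qed
  qed
qed

end
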